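(* Let $d\ge1$, $\mathcal{X}=\mathbb{R}^d$, starting point $x_0=\mathbf{0}$, and $0<\mu\le L$. There exists a sequence of differentiable functions $f_1,\dots,f_T:\mathbb{R}^d\to[0,\infty)$, each satisfying $\frac{\mu}{2}\|y-x\|^2\le f_t(y)-f_t(x)-\langle\nabla f_t(x),y-x\rangle\le\frac{L}{2}\|y-x\|^2$ for all $x,y$, such that the OMGD algorithm with $K=\lceil\frac{L+\mu}{2\mu}\ln4\rceil$ satisfies $$\frac{C_{\mathcal{A}_o}}{C_{\mathsf{OPT}}}\ge 1+\frac{L+1}{4\mu}+\frac{L+1}{8}.$$
   Context: Quadratic-switching cost of $(y_1,\dots,y_T)$ with $y_0=x_0$: $\sum_{t=1}^T\big(f_t(y_t)+\frac12\|y_t-y_{t-1}\|^2\big)$; $C_{\mathsf{OPT}}$ is its minimum over all sequences. The OMGD algorithm with parameter $K$ produces $x_1=x_0$ and, for $t=2,\dots,T$: $z_t^{(0)}=x_{t-1}$, $z_t^{(k)}=\Pi_{\mathcal{X}}\big(z_t^{(k-1)}-\frac1L\nabla f_{t-1}(z_t^{(k-1)})\big)$ for $k=1,\dots,K$, and $x_t=z_t^{(K)}$ ($\Pi_{\mathcal{X}}$ is Euclidean projection, here the identity). $C_{\mathcal{A}_o}$ is the quadratic-switching cost of $(x_1,\dots,x_T)$. *)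

theory Defs
  imports "HOL-Analysis.Analysis"
begin

text \<open>Quadratic-switching cost of a sequence y (indices 1..T), with y 0 playing the role of y_0 = x_0.\<close>
definition qs_cost :: "nat \<Rightarrow> (nat \<Rightarrow> 'a::euclidean_space \<Rightarrow> real) \<Rightarrow> (nat \<Rightarrow> 'a) \<Rightarrow> real" where
  "qs_cost T f y = (\<Sum>t=1..T. f t (y t) + (1/2) * (norm (y t - y (t - 1)))^2)"

definition C_OPT :: "nat \<Rightarrow> (nat \<Rightarrow> 'a::euclidean_space \<Rightarrow> real) \<Rightarrow> 'a \<Rightarrow> real" where
  "C_OPT T f x0 = (INF y \<in> {y. y 0 = x0}. qs_cost T f y)"

text \<open>OMGD iterates: g t is the gradient of f_t; X = whole space so projection is identity.
  omgd L K g x0 t = x_t (with x_0 = x_1 = x0).\<close>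
fun omgd :: "real \<Rightarrow> nat \<Rightarrow> (nat \<Rightarrow> 'a::euclidean_space \<Rightarrow> 'a) \<Rightarrow> 'a \<Rightarrow> nat \<Rightarrow> 'a" where
  "omgd L K g x0 0 = x0"
| "omgd L K g x0 (Suc 0) = x0"
| "omgd L K g x0 (Suc (Suc t)) =
     ((\<lambda>z. z - (1 / L) *\<^sub>R g (Suc t) z) ^^ K) (omgd L K g x0 (Suc t))"

end

theory Submission
  imports Defs
begin

lemma iter_lem: fixes e :: "'a::euclidean_space" assumes "L \<noteq> 0"
  shows "((\<lambda>z. z - (1 / L) *\<^sub>R (\<mu> *\<^sub>R (z - e))) ^^ n) 0 = (1 - (1 - \<mu>/L)^n) *\<^sub>R e"
proof (induction n)
  case 0 show ?case by simp
next
  case (Suc n)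
  define q where "q = (1 - \<mu>/L)"
  have "((\<lambda>z. z - (1 / L) *\<^sub>R (\<mu> *\<^sub>R (z - e))) ^^ Suc n) 0
     = ((1 - q^n) *\<^sub>R e) - (1/L) *\<^sub>R (\<mu> *\<^sub>R ((1 - q^n) *\<^sub>R e - e))"
    using Suc q_def by simp
  also have "\<dots> = ((1 - q^n) - (1/L) * \<mu> * ((1 - q^n) - 1)) *\<^sub>R e"
    by (simp add: algebra_simps)
  also have "(1 - q^n) - (1/L) * \<mu> * ((1 - q^n) - 1) = 1 - q^Suc n"
    unfolding q_def using assms by (simp add: field_simps)
  finally show ?case unfolding q_def .
qed

lemma deriv_lem: "((\<lambda>x::'a::euclidean_space. c/2 * ((x - e) \<bullet> (x - e))) has_derivative (\<lambda>h. (c *\<^sub>R (x - e)) \<bullet> h)) (at x)"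
  apply (rule derivative_eq_intros refl | simp)+
  apply (simp add: fun_eq_iff inner_commute)
  done

lemma quad_lem: fixes x y e :: "'a::euclidean_space"
  shows "c/2 * ((y - e) \<bullet> (y - e)) - c/2 * ((x - e) \<bullet> (x - e)) - (c *\<^sub>R (x - e)) \<bullet> (y - x)
        = c/2 * (norm (y - x))^2"
  by (simp add: power2_norm_eq_inner inner_diff_left inner_diff_right inner_commute algebra_simps)

lemma pos_lem: fixes y e :: "'a::euclidean_space" assumes "norm e = 1" "0 < \<mu>"
  shows "min \<mu> 1 / 8 \<le> \<mu>/2 * (norm (y - e))^2 + 1/2 * (norm y)^2"
proof -
  have "1 \<le> norm y + norm (y - e)" using norm_triangle_ineq4[of y "y - e"] assms(1) by simp
  hence "1/2 \<le> norm y \<or> 1/2 \<le> norm (y - e)" by linarith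
  moreover have "1/2 \<le> a \<Longrightarrow> 1/4 \<le> a^2" for a :: real
    using mult_mono[of "1/2" a "1/2" a] by (simp add: power2_eq_square)
  ultimately have "1/4 \<le> (norm y)^2 \<or> 1/4 \<le> (norm (y - e))^2" by blast
  moreover have "0 \<le> (norm y)^2" "0 \<le> (norm (y - e))^2" by auto
  moreover have "min \<mu> 1 \<le> \<mu>" "min \<mu> 1 \<le> 1" "0 < min \<mu> 1" using assms(2) by auto
  moreover have "min \<mu> 1 * (norm (y - e))^2 \<le> \<mu> * (norm (y - e))^2"
    by (rule mult_right_mono) auto
  moreover have "min \<mu> 1 * (norm y)^2 \<le> 1 * (norm y)^2"
    by (rule mult_right_mono) auto
  moreover have "min \<mu> 1 /4 \<le> min \<mu> 1 * (norm (y - e))^2 \<or> min \<mu> 1 /4 \<le> min \<mu> 1 * (norm y)^2"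
  proof -
    have m0: "0 \<le> min \<mu> 1" using assms(2) by simp
    from \<open>1/4 \<le> (norm y)^2 \<or> 1/4 \<le> (norm (y - e))^2\<close> show ?thesis
      using mult_left_mono[OF _ m0, of "1/4" "(norm y)^2"] mult_left_mono[OF _ m0, of "1/4" "(norm (y-e))^2"]
      by auto
  qed
  moreover have "0 \<le> min \<mu> 1 * (norm y)^2" "0 \<le> min \<mu> 1 * (norm (y - e))^2" using assms(2) by auto
  ultimately show ?thesis apply - apply (elim disjE) by linarith+
qed

theorem lemma6:
  fixes \<mu> L :: real
  assumes "0 < \<mu>" and "\<mu> \<le> L"
  shows "\<exists>(T::nat) (f :: nat \<Rightarrow> 'a::euclidean_space \<Rightarrow> real) (g :: nat \<Rightarrow> 'a \<Rightarrow> 'a).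
     T \<ge> 1 \<and>
     (\<forall>t\<in>{1..T}. \<forall>x. (f t has_derivative (\<lambda>h. g t x \<bullet> h)) (at x)) \<and>
     (\<forall>t\<in>{1..T}. \<forall>x. f t x \<ge> 0) \<and>
     (\<forall>t\<in>{1..T}. \<forall>x y.
        \<mu> / 2 * (norm (y - x))^2 \<le> f t y - f t x - g t x \<bullet> (y - x) \<and>
        f t y - f t x - g t x \<bullet> (y - x) \<le> L / 2 * (norm (y - x))^2) \<and>
     (let K = nat \<lceil>(L + \<mu>) / (2 * \<mu>) * ln 4\<rceil>
      in qs_cost T f (omgd L K g 0) / C_OPT T f 0
           \<ge> 1 + (L + 1) / (4 * \<mu>) + (L + 1) / 8)"
proof -
  define e :: 'a where "e = (SOME b. b \<in> Basis)"
  have eB: "e \<in> Basis" unfolding e_def by (rule someI_ex) (use nonempty_Basis in blast)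
  have ne: "norm e = 1" using eB by simp
  have ee: "e \<bullet> e = 1" using eB by simp
  define f :: "nat \<Rightarrow> 'a \<Rightarrow> real" where
    "f = (\<lambda>t x. if t = 1 then \<mu>/2 * ((x - e) \<bullet> (x - e)) else L/2 * ((x - 0) \<bullet> (x - 0)))"
  define g :: "nat \<Rightarrow> 'a \<Rightarrow> 'a" where
    "g = (\<lambda>t x. if t = 1 then \<mu> *\<^sub>R (x - e) else L *\<^sub>R (x - 0))"
  have Lpos: "0 < L" using assms by linarith
  have c1: "\<forall>t\<in>{1..2}. \<forall>x. (f t has_derivative (\<lambda>h. g t x \<bullet> h)) (at x)"
    using deriv_lem[of \<mu> e] deriv_lem[of L "0::'a"] by (auto simp: f_def g_def)
  have c2: "\<forall>t\<in>{1..2}. \<forall>x. f t x \<ge> 0"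
    unfolding f_def using assms Lpos by auto
  have c3: "\<forall>t\<in>{1..2::nat}. \<forall>x y.
        \<mu> / 2 * (norm (y - x))^2 \<le> f t y - f t x - g t x \<bullet> (y - x) \<and>
        f t y - f t x - g t x \<bullet> (y - x) \<le> L / 2 * (norm (y - x))^2"
  proof (intro ballI allI)
    fix t :: nat and x y :: 'a
    have m: "\<mu> / 2 * (norm (y - x))^2 \<le> L / 2 * (norm (y - x))^2"
      using assms by (intro mult_right_mono) auto
    show "\<mu> / 2 * (norm (y - x))^2 \<le> f t y - f t x - g t x \<bullet> (y - x) \<and>
        f t y - f t x - g t x \<bullet> (y - x) \<le> L / 2 * (norm (y - x))^2"
      unfolding f_def g_def using quad_lem[of \<mu> y e x] quad_lem[of L y 0 x] m by auto
  qed
  define K where "K = nat \<lceil>(L + \<mu>) / (2 * \<mu>) * ln 4\<rceil>"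
  define c where "c = 1 - (1 - \<mu>/L)^K"
  have x2: "omgd L K g 0 2 = c *\<^sub>R e"
  proof -
    have "omgd L K g 0 2 = ((\<lambda>z. z - (1 / L) *\<^sub>R g 1 z) ^^ K) 0"
      by (simp add: numeral_2_eq_2)
    also have "(\<lambda>z. z - (1 / L) *\<^sub>R g 1 z) = (\<lambda>z. z - (1 / L) *\<^sub>R (\<mu> *\<^sub>R (z - e)))"
      unfolding g_def by simp
    finally show ?thesis using iter_lem[where L=L and e=e and \<mu>=\<mu> and n=K] Lpos c_def by simp
  qed
  have x1: "omgd L K g 0 1 = 0" by simp
  have x0: "omgd L K g 0 0 = 0" by simp
  have sum2: "\<And>h::nat\<Rightarrow>real. (\<Sum>t=1..2. h t) = h 1 + h 2"
    by (simp add: numeral_2_eq_2)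
  have ALG: "qs_cost 2 f (omgd L K g 0) = \<mu>/2 + (L+1)/2 * c^2"
    unfolding qs_cost_def sum2 x2 x1 f_def
    using ee ne by (simp add: power2_norm_eq_inner algebra_simps power2_eq_square abs_mult_self_eq)
  have chalf: "1/2 \<le> c"
  proof -
    define r where "r = \<mu>/L"
    have r0: "0 < r" "r \<le> 1" using assms Lpos unfolding r_def by auto
    have "ln 2 \<le> K * r"
    proof -
      have "(L + \<mu>) / (2 * \<mu>) * ln 4 \<le> K" unfolding K_def by linarith
      moreover have "ln 4 = 2 * ln (2::real)"
        using ln_mult[of 2 2] by simp
      ultimately have "(L + \<mu>) / \<mu> * ln 2 \<le> K" by simp
      hence "(L + \<mu>) / \<mu> * ln 2 * r \<le> K * r" using r0 by (intro mult_right_mono) auto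
      moreover have "(L + \<mu>) / \<mu> * ln 2 * r = (L + \<mu>) / L * ln 2"
        unfolding r_def using assms Lpos by (simp add: field_simps)
      moreover have "ln 2 \<le> (L + \<mu>) / L * ln 2"
        using mult_right_mono[of 1 "(L + \<mu>) / L" "ln 2"] assms Lpos by (simp add: field_simps)
      ultimately show ?thesis by linarith
    qed
    have "(1 - r)^K \<le> exp (- r)^K"
      using r0 by (intro power_mono) (use exp_ge_add_one_self[of "-r"] in auto)
    also have "\<dots> = exp (- (K * r))" by (simp add: exp_of_nat_mult[symmetric])
    also have "\<dots> \<le> exp (- ln 2)" using \<open>ln 2 \<le> K * r\<close> by simp
    also have "\<dots> = 1/2" by (simp add: exp_minus)
    finally show ?thesis unfolding c_def r_def by simp
  qed
  define u where "u = \<mu>/(\<mu>+2)"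
  define ys :: "nat \<Rightarrow> 'a" where "ys = (\<lambda>t. if t = 1 then u *\<^sub>R e else 0)"
  have Ucost: "qs_cost 2 f ys = \<mu>/(\<mu>+2)"
  proof -
    have "qs_cost 2 f ys = \<mu>/2 * (u-1)^2 + u^2"
      unfolding qs_cost_def sum2 ys_def f_def
      using ee ne by (simp add: power2_norm_eq_inner algebra_simps power2_eq_square abs_mult_self_eq)
    also have "\<dots> = \<mu>/(\<mu>+2)"
    proof -
      have d: "\<mu> + 2 \<noteq> 0" "(\<mu> + 2)^2 \<noteq> 0" using assms by auto
      have "u - 1 = -2/(\<mu>+2)" unfolding u_def using d by (simp add: field_simps)
      hence "\<mu>/2 * (u-1)^2 + u^2 = (2*\<mu> + \<mu>^2)/(\<mu>+2)^2"
        unfolding u_def using d by (simp add: power_divide add_divide_distrib)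
      also have "\<dots> = \<mu>/(\<mu>+2)" using d by (simp add: power2_eq_square field_simps)
      finally show ?thesis .
    qed
    finally show ?thesis .
  qed
  have nn: "\<And>y. 0 \<le> qs_cost 2 f y"
    unfolding qs_cost_def using c2 by (intro sum_nonneg) auto
  have Ule: "C_OPT 2 f 0 \<le> \<mu>/(\<mu>+2)"
    unfolding C_OPT_def Ucost[symmetric]
    by (rule cINF_lower) (auto simp: ys_def intro!: bdd_belowI[where m=0] nn)
  have Lge: "min \<mu> 1 / 8 \<le> C_OPT 2 f 0"
    unfolding C_OPT_def
  proof (rule cINF_greatest)
    show "{y. y 0 = (0::'a)} \<noteq> {}" by auto
  next
    fix y :: "nat \<Rightarrow> 'a" assume "y \<in> {y. y 0 = 0}"
    hence y0: "y 0 = 0" by simp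
    have "qs_cost 2 f y = f 1 (y 1) + 1/2 * (norm (y 1))^2 + (f 2 (y 2) + 1/2 * (norm (y 2 - y 1))^2)"
      unfolding qs_cost_def sum2 using y0 by simp
    moreover have "f 1 (y 1) = \<mu>/2 * (norm (y 1 - e))^2"
      unfolding f_def by (simp add: power2_norm_eq_inner)
    moreover have "0 \<le> f 2 (y 2) + 1/2 * (norm (y 2 - y 1))^2" using c2 by simp
    ultimately show "min \<mu> 1 / 8 \<le> qs_cost 2 f y" using pos_lem[OF ne assms(1), of "y 1"] by linarith
  qed
  have Opos: "0 < C_OPT 2 f 0" using Lge assms by (simp add: min_def split: if_splits)
  have ratio: "\<mu>/2 + (L+1)/2 * c^2 \<le> qs_cost 2 f (omgd L K g 0) / C_OPT 2 f 0 * (\<mu>/(\<mu>+2))"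
  proof -
    have "qs_cost 2 f (omgd L K g 0) / C_OPT 2 f 0 * C_OPT 2 f 0 = \<mu>/2 + (L+1)/2 * c^2"
      using Opos ALG by simp
    moreover have "qs_cost 2 f (omgd L K g 0) / C_OPT 2 f 0 * C_OPT 2 f 0 \<le>
        qs_cost 2 f (omgd L K g 0) / C_OPT 2 f 0 * (\<mu>/(\<mu>+2))"
      using Ule Opos nn by (intro mult_left_mono) auto
    ultimately show ?thesis by linarith
  qed
  have fin: "1 + (L + 1) / (4 * \<mu>) + (L + 1) / 8 \<le> (\<mu>/2 + (L+1)/2 * c^2) * ((\<mu>+2)/\<mu>)"
  proof -
    have c2': "1/4 \<le> c^2" using chalf mult_mono[of "1/2" c "1/2" c] by (simp add: power2_eq_square)
    have "(\<mu>/2 + (L+1)/2 * c^2) * ((\<mu>+2)/\<mu>) = 1 + (L+1)*c^2/\<mu> + (L+1)*c^2/2 + \<mu>/2"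
      using assms by (simp add: field_simps)
    moreover have "(L+1)/(4*\<mu>) \<le> (L+1)*c^2/\<mu>"
    proof -
      have "(L+1)*(1/4) \<le> (L+1)*c^2" using Lpos c2' by (intro mult_left_mono) auto
      hence "(L+1)*(1/4)/\<mu> \<le> (L+1)*c^2/\<mu>" using assms by (intro divide_right_mono) auto
      thus ?thesis by simp
    qed
    moreover have "(L+1)/8 \<le> (L+1)*c^2/2"
    proof -
      have "(L+1)*(1/4) \<le> (L+1)*c^2" using Lpos c2' by (intro mult_left_mono) auto
      thus ?thesis by simp
    qed
    ultimately show ?thesis using assms by linarith
  qed
  have "1 + (L + 1) / (4 * \<mu>) + (L + 1) / 8 \<le> qs_cost 2 f (omgd L K g 0) / C_OPT 2 f 0"
  proof -
    have "(\<mu>/2 + (L+1)/2 * c^2) * ((\<mu>+2)/\<mu>) \<le> qs_cost 2 f (omgd L K g 0) / C_OPT 2 f 0"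
    proof -
      define Q where "Q = qs_cost 2 f (omgd L K g 0) / C_OPT 2 f 0"
      define A where "A = \<mu>/2 + (L+1)/2 * c^2"
      have p: "0 < \<mu>/(\<mu>+2)" using assms by simp
      have "A / (\<mu>/(\<mu>+2)) \<le> Q" using ratio[folded Q_def A_def] by (simp only: pos_divide_le_eq[OF p])
      moreover have "A / (\<mu>/(\<mu>+2)) = A * ((\<mu>+2)/\<mu>)" by simp
      ultimately show ?thesis unfolding Q_def A_def by simp
    qed
    thus ?thesis using fin by linarith
  qed
  thus ?thesis using c1 c2 c3 unfolding K_def Let_def
    by (intro exI[of _ 2] exI[of _ f] exI[of _ g]) auto
qed

end
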